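(* Let $R,S\in GL(2,\mathbb{C})$ be diagonalizable matrices with eigenvalues $r_1,r_2\in S^1$ and $s_1,s_2\in S^1$ respectively, such that $r_1\ne r_2$, $s_1\ne s_2$, $\{r_1,r_2\}\cap\{s_1,s_2\}=\emptyset$, and $1$ is an eigenvalue of $RS^{-1}$. Then there is a non-degenerate Hermitian form $\langle\cdot,\cdot\rangle_H$ on $\mathbb{C}^2$ invariant under both $R$ and $S$, unique up to multiplication by a real scalar. Moreover, $\langle\cdot,\cdot\rangle_H$ is definite if and only if the two pairs $\{r_1,r_2\}$ and $\{s_1,s_2\}$ interlace on the unit circle.
   Context: $S^1$ is the unit circle in $\mathbb{C}$. A Hermitian form $h$ is invariant under $R$ if $h(Rv,Rw)=h(v,w)$ for all $v,w\in\mathbb{C}^2$. Two pairs of distinct points on a circle interlace if each of the two arcs determined by one pair contains exactly one point of the other pair. *)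

theory Defs
  imports "HOL-Analysis.Analysis"
begin

type_synonym cmat2 = "complex ^ 2 ^ 2"
type_synonym cvec2 = "complex ^ 2"

definition diag2 :: "complex \<Rightarrow> complex \<Rightarrow> cmat2" where
  "diag2 a b = vector [vector [a, 0], vector [0, b]]"

definition diagonalizable_with :: "cmat2 \<Rightarrow> complex \<Rightarrow> complex \<Rightarrow> bool" where
  "diagonalizable_with A a b \<longleftrightarrow>
     (\<exists>P::cmat2. invertible P \<and> A = P ** diag2 a b ** matrix_inv P)"

definition is_eigenvalue :: "cmat2 \<Rightarrow> complex \<Rightarrow> bool" where
  "is_eigenvalue A l \<longleftrightarrow> (\<exists>v::cvec2. v \<noteq> 0 \<and> A *v v = l *s v)"

definition hform :: "cmat2 \<Rightarrow> cvec2 \<Rightarrow> cvec2 \<Rightarrow> complex" where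
  "hform H v w = (\<Sum>i\<in>UNIV. \<Sum>j\<in>UNIV. cnj (v $ i) * (H $ i $ j) * w $ j)"

definition hermitian_mat :: "cmat2 \<Rightarrow> bool" where
  "hermitian_mat H \<longleftrightarrow> (\<forall>i j. H $ i $ j = cnj (H $ j $ i))"

definition nondegenerate_form :: "cmat2 \<Rightarrow> bool" where
  "nondegenerate_form H \<longleftrightarrow> (\<forall>w. (\<forall>v. hform H v w = 0) \<longrightarrow> w = 0)"

definition invariant_form :: "cmat2 \<Rightarrow> cmat2 \<Rightarrow> bool" where
  "invariant_form H R \<longleftrightarrow> (\<forall>v w. hform H (R *v v) (R *v w) = hform H v w)"

definition definite_form :: "cmat2 \<Rightarrow> bool" where
  "definite_form H \<longleftrightarrow>
     (\<forall>v. v \<noteq> 0 \<longrightarrow> Re (hform H v v) > 0) \<or> (\<forall>v. v \<noteq> 0 \<longrightarrow> Re (hform H v v) < 0)"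

definition ccw_arc :: "complex \<Rightarrow> complex \<Rightarrow> complex set" where
  "ccw_arc a b = {z. \<exists>t T. 0 < t \<and> t < T \<and> T < 2 * pi \<and> b = a * cis T \<and> z = a * cis t}"

definition interlace :: "complex \<Rightarrow> complex \<Rightarrow> complex \<Rightarrow> complex \<Rightarrow> bool" where
  "interlace a1 a2 b1 b2 \<longleftrightarrow>
     card ({b1, b2} \<inter> ccw_arc a1 a2) = 1 \<and> card ({b1, b2} \<inter> ccw_arc a2 a1) = 1 \<and>
     card ({a1, a2} \<inter> ccw_arc b1 b2) = 1 \<and> card ({a1, a2} \<inter> ccw_arc b2 b1) = 1"

end

theory Submission
  imports Defs
begin



lemma arg_cis: "0 \<le> a \<Longrightarrow> a < 2*pi \<Longrightarrow> Arg2pi (cis a) = a"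
  by (rule Arg2pi_unique[of 1]) (auto simp: cis_conv_exp)

lemma cis_inj: "0 \<le> a \<Longrightarrow> a < 2*pi \<Longrightarrow> 0 \<le> b \<Longrightarrow> b < 2*pi \<Longrightarrow> cis a = cis b \<Longrightarrow> a = b"
  by (metis arg_cis)

definition dd :: "real \<Rightarrow> real \<Rightarrow> real" where
  "dd X V = (if V \<le> X then X - V else X - V + 2*pi)"

lemma cis_dd: "cis (dd X V) = cis (X - V)"
  by (simp add: dd_def cis.ctr)

lemma dd_range: "0 \<le> X \<Longrightarrow> X < 2*pi \<Longrightarrow> 0 \<le> V \<Longrightarrow> V < 2*pi \<Longrightarrow> 0 \<le> dd X V \<and> dd X V < 2*pi"
  by (simp add: dd_def)

lemma arc_mem:
  assumes r0: "r0 \<noteq> 0" and A: "0 \<le> A" "A < 2*pi" and B: "0 \<le> B" "B < 2*pi" and Z: "0 \<le> Z" "Z < 2*pi"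
    and AB: "A \<noteq> B"
  shows "r0 * cis Z \<in> ccw_arc (r0 * cis A) (r0 * cis B) \<longleftrightarrow> Z \<noteq> A \<and> dd Z A < dd B A"
proof
  assume "r0 * cis Z \<in> ccw_arc (r0 * cis A) (r0 * cis B)"
  then obtain t T where tT: "0 < t" "t < T" "T < 2*pi" "r0 * cis B = r0 * cis A * cis T" "r0 * cis Z = r0 * cis A * cis t"
    unfolding ccw_arc_def by blast
  have "cis T = cis (B - A)" using tT(4) r0 by (simp add: cis_mult cis_divide[symmetric] field_simps)
  then have "cis T = cis (dd B A)" by (simp add: cis_dd)
  then have eT: "T = dd B A" using cis_inj[of T "dd B A"] dd_range[OF B A] tT by linarith
  have "cis t = cis (Z - A)" using tT(5) r0 by (simp add: cis_mult cis_divide[symmetric] field_simps)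
  then have "cis t = cis (dd Z A)" by (simp add: cis_dd)
  then have et: "t = dd Z A" using cis_inj[of t "dd Z A"] dd_range[OF Z A] tT by linarith
  show "Z \<noteq> A \<and> dd Z A < dd B A" using et eT tT by (auto simp: dd_def)
next
  assume h: "Z \<noteq> A \<and> dd Z A < dd B A"
  have "0 < dd Z A" using h A Z by (auto simp: dd_def)
  moreover have "dd B A < 2*pi" using dd_range[OF B A] by simp
  moreover have "r0 * cis B = r0 * cis A * cis (dd B A)" by (simp add: cis_dd cis_mult)
  moreover have "r0 * cis Z = r0 * cis A * cis (dd Z A)" by (simp add: cis_dd cis_mult)
  ultimately show "r0 * cis Z \<in> ccw_arc (r0 * cis A) (r0 * cis B)"
    unfolding ccw_arc_def using h by blast
qed

lemma card_one: "b1 \<noteq> b2 \<Longrightarrow> card ({b1, b2} \<inter> X) = 1 \<longleftrightarrow> \<not> (b1 \<in> X \<longleftrightarrow> b2 \<in> X)"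
  by (cases "b1 \<in> X"; cases "b2 \<in> X") (auto simp: Int_insert_left)

lemma arith_interlace:
  fixes T x y :: real
  assumes "0 < T" "T < 2*pi" "0 < x" "x < 2*pi" "0 < y" "y < 2*pi" "x \<noteq> y" "x \<noteq> T" "y \<noteq> T"
  shows "(\<not> ((x \<noteq> 0 \<and> dd x 0 < dd T 0) \<longleftrightarrow> (y \<noteq> 0 \<and> dd y 0 < dd T 0))) \<and>
         (\<not> ((x \<noteq> T \<and> dd x T < dd 0 T) \<longleftrightarrow> (y \<noteq> T \<and> dd y T < dd 0 T))) \<and>
         (\<not> ((0 \<noteq> x \<and> dd 0 x < dd y x) \<longleftrightarrow> (T \<noteq> x \<and> dd T x < dd y x))) \<and>
         (\<not> ((0 \<noteq> y \<and> dd 0 y < dd x y) \<longleftrightarrow> (T \<noteq> y \<and> dd T y < dd x y)))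
     \<longleftrightarrow> \<not> (x < T \<longleftrightarrow> y < T)"
  using assms unfolding dd_def by (auto split: if_splits)

lemma cis_diff: "cis a - cis b = 2 * \<i> * complex_of_real (sin ((a-b)/2)) * cis ((a+b)/2)"
proof -
  have e: "cis a = cis ((a+b)/2) * cis ((a-b)/2)" "cis b = cis ((a+b)/2) * cis (-((a-b)/2))"
    by (simp_all add: cis_mult field_simps)
  have "cis ((a-b)/2) - cis (-((a-b)/2)) = 2 * \<i> * complex_of_real (sin ((a-b)/2))"
    by (simp add: complex_eq_iff)
  then show ?thesis unfolding e by (simp add: algebra_simps flip: right_diff_distrib)
qed




lemma alg:
  fixes r1 r2 s1 s2 p q u t :: complex
  assumes u1: "r1 * cnj r1 = 1" and u2: "r2 * cnj r2 = 1" and u3: "s1 * cnj s1 = 1" and u4: "s2 * cnj s2 = 1"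
    and d: "r1 \<noteq> r2" "r1 \<noteq> s1" "r1 \<noteq> s2" "r2 \<noteq> s1" "r2 \<noteq> s2"
    and tr: "p + t = s1 + s2" and dt: "p*t - q*u = s1 * s2" and ev: "(r1-p)*(r2-t) = q*u"
  shows "t = s1 * s2*cnj p" "q*u = s1 * s2*(p*cnj p - 1)" "q \<noteq> 0" "u \<noteq> 0"
    "(1 - p * cnj p) * (s1 * s2*(r1-r2)^2) = (r1-s1)*(r1-s2)*(r2-s1)*(r2-s2)"
proof -
  have i: "r1*t + r2*p = r1*r2 + s1 * s2" using dt ev by (simp add: algebra_simps)
  have ci: "cnj r1 * cnj t + cnj r2 * cnj p = cnj r1 * cnj r2 + cnj s1 * cnj s2"
    using arg_cong[OF i, of cnj] by simp
  have ctr: "cnj p + cnj t = cnj s1 + cnj s2" using arg_cong[OF tr, of cnj] by simp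
  define X where "X = s1 * s2*cnj p"
  have sX: "s1 * s2*cnj t = s1 + s2 - X"
  proof -
    have "s1 * s2*cnj t = s1 * s2*(cnj s1 + cnj s2) - X" unfolding X_def using ctr
      by (simp add: algebra_simps flip: ctr)
    also have "s1 * s2*(cnj s1 + cnj s2) = s2 * (s1 * cnj s1) + s1 * (s2 * cnj s2)" by (simp add: algebra_simps)
    finally show ?thesis using u3 u4 by simp
  qed
  have "r1*X + r2*(s1+s2-X) = r1*X + r2*(s1 * s2*cnj t)" using sX by simp
  also have "\<dots> = s1 * s2*(r1*cnj p + r2*cnj t)"
    unfolding X_def by (simp add: algebra_simps)
  also have "r1*cnj p + r2*cnj t = r1*r2*(cnj r1 * cnj t + cnj r2 * cnj p)"
  proof -
    have "r1*r2*(cnj r1 * cnj t + cnj r2 * cnj p) = r2*(r1*cnj r1)*cnj t + r1*(r2*cnj r2)*cnj p"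
      by (simp add: algebra_simps)
    then show ?thesis using u1 u2 by (simp add: algebra_simps)
  qed
  also have "s1 * s2*(r1*r2*(cnj r1 * cnj t + cnj r2 * cnj p)) = r1*r2 + s1 * s2"
  proof -
    have "s1 * s2*(r1*r2*(cnj r1 * cnj t + cnj r2 * cnj p)) = s1 * s2*(r1*cnj r1)*(r2*cnj r2) + r1*r2*(s1*cnj s1)*(s2*cnj s2)"
      unfolding ci by (simp add: algebra_simps)
    then show ?thesis using u1 u2 u3 u4 by (simp add: algebra_simps)
  qed
  finally have eX: "r1*X + r2*(s1+s2-X) = r1*r2 + s1 * s2" .
  have et: "r1*t + r2*(s1+s2-t) = r1*r2 + s1 * s2" using i tr by (simp add: algebra_simps flip: tr)
  have "(r1 - r2) * (X - t) = (r1*X + r2*(s1+s2-X)) - (r1*t + r2*(s1+s2-t))" by (simp add: algebra_simps)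
  then have "(r1 - r2) * (X - t) = 0" using eX et by simp
  then show tX: "t = s1 * s2*cnj p" using d(1) unfolding X_def by simp
  show qu: "q*u = s1 * s2*(p*cnj p - 1)" using dt tX by (simp add: algebra_simps)
  have "q*u \<noteq> 0"
  proof
    assume "q*u = 0"
    then have pt: "p*t = s1 * s2" using dt by (metis diff_zero)
    have "(p - s1)*(p - s2) = p*p - p*(s1+s2) + s1 * s2" by (simp add: algebra_simps)
    also have "\<dots> = p*p - p*(p+t) + p*t" using tr pt by simp
    also have "\<dots> = 0" by (simp add: algebra_simps)
    finally have "(p - s1)*(p - s2) = 0" .
    moreover have "(r1-p)*(r2-t) = 0" using ev \<open>q*u = 0\<close> by simp
    ultimately show False using tr d
      by (smt (verit, ccfv_threshold) add_diff_cancel_left' add_diff_cancel_right' eq_iff_diff_eq_0 mult_eq_0_iff)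
  qed
  then show "q \<noteq> 0" "u \<noteq> 0" by auto
  have tt: "t = s1+s2-p" "p = s1+s2-t" using tr by (simp_all add: algebra_simps flip: tr)
  have "(r1 - p)*(r2 - r1) + (r1-s1)*(r1-s2) = (r1*r2 + s1 * s2) - (r1*(s1+s2-p) + r2*p)"
    by (simp add: algebra_simps)
  also have "\<dots> = 0" using i tt(1) by simp
  finally have p1: "(r1 - p)*(r2 - r1) = -((r1-s1)*(r1-s2))" by (simp add: add_eq_0_iff)
  have "(r2 - t)*(r1 - r2) + (r2-s1)*(r2-s2) = (r1*r2 + s1 * s2) - (r1*t + r2*(s1+s2-t))"
    by (simp add: algebra_simps)
  also have "\<dots> = 0" using i tt(2) by simp
  finally have p2: "(r2 - t)*(r1 - r2) = -((r2-s1)*(r2-s2))" by (simp add: add_eq_0_iff)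
  have "(1 - p * cnj p) * (s1 * s2*(r1-r2)^2) = - (q*u) * (r1-r2)*(r1-r2)"
    unfolding qu by (simp add: algebra_simps power2_eq_square)
  also have "\<dots> = ((r1 - p)*(r2 - r1)) * ((r2 - t)*(r1 - r2))" unfolding ev[symmetric] by (simp add: algebra_simps)
  also have "\<dots> = (r1-s1)*(r1-s2)*(r2-s1)*(r2-s2)" unfolding p1 p2 by (simp add: algebra_simps)
  finally show "(1 - p * cnj p) * (s1 * s2*(r1-r2)^2) = (r1-s1)*(r1-s2)*(r2-s1)*(r2-s2)" .
qed




definition adj :: "cmat2 \<Rightarrow> cmat2" where "adj M = (\<chi> i j. cnj (M $ j $ i))"

lemma mat2_eq: "(A::cmat2) = B \<longleftrightarrow> A$1$1 = B$1$1 \<and> A$1$2 = B$1$2 \<and> A$2$1 = B$2$1 \<and> A$2$2 = B$2$2"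
  by (auto simp: vec_eq_iff forall_2)

lemma vec2_eq: "(v::cvec2) = w \<longleftrightarrow> v$1 = w$1 \<and> v$2 = w$2"
  by (auto simp: vec_eq_iff forall_2)

lemmas ent = matrix_matrix_mult_def matrix_vector_mult_def sum_2 mat_def adj_def diag2_def hform_def

lemma mult_ent[simp]: "((A::cmat2) ** B) $ i $ j = A$i$1 * B$1$j + A$i$2 * B$2$j"
  by (simp add: matrix_matrix_mult_def sum_2)
lemma mv_ent[simp]: "((A::cmat2) *v v) $ i = A$i$1 * v$1 + A$i$2 * v$2"
  by (simp add: matrix_vector_mult_def sum_2)
lemma adj_ent[simp]: "adj M $ i $ j = cnj (M $ j $ i)"
  by (simp add: adj_def)
lemma mat1_ent[simp]: "(mat 1 :: cmat2) $ 1 $ 1 = 1" "(mat 1 :: cmat2) $ 2 $ 2 = 1"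
   "(mat 1 :: cmat2) $ 1 $ 2 = 0" "(mat 1 :: cmat2) $ 2 $ 1 = 0"
  by (simp_all add: mat_def)
lemma diag2_ent[simp]: "diag2 a b $ 1 $ 1 = a" "diag2 a b $ 2 $ 2 = b"
   "diag2 a b $ 1 $ 2 = 0" "diag2 a b $ 2 $ 1 = 0"
  by (simp_all add: diag2_def)
lemma hform_ent: "hform H v w = cnj (v$1) * H$1$1 * w$1 + cnj (v$1) * H$1$2 * w$2 + cnj (v$2) * H$2$1 * w$1 + cnj (v$2) * H$2$2 * w$2"
  by (simp add: hform_def sum_2)

lemma adj_mult: "adj ((A::cmat2) ** B) = adj B ** adj A"
  by (simp add: mat2_eq)
lemma adj_one: "adj (mat 1 :: cmat2) = mat 1"
  by (simp add: mat2_eq)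

lemma hform_mv: "hform H (M *v v) (M *v w) = hform (adj M ** H ** M) v w"
  by (simp add: hform_ent algebra_simps)

lemma inv_props: "invertible (P::cmat2) \<Longrightarrow> P ** matrix_inv P = mat 1 \<and> matrix_inv P ** P = mat 1"
  unfolding invertible_def matrix_inv_def by (rule someI_ex)

lemma hform_axis: "hform H (axis i 1) (axis j 1) = H $ i $ j"
  using exhaust_2[of i] exhaust_2[of j] by (auto simp: hform_ent axis_def)

lemma inv_form_iff: "invariant_form H M \<longleftrightarrow> adj M ** H ** M = H"
proof
  assume "invariant_form H M"
  then have "hform (adj M ** H ** M) (axis i 1) (axis j 1) = hform H (axis i 1) (axis j 1)" for i j
    unfolding invariant_form_def hform_mv[symmetric] by simp
  then show "adj M ** H ** M = H" unfolding hform_axis by (simp add: vec_eq_iff)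
next
  assume "adj M ** H ** M = H"
  then show "invariant_form H M" unfolding invariant_form_def hform_mv by simp
qed

lemma herm_iff: "hermitian_mat H \<longleftrightarrow> adj H = H"
proof
  assume h: "hermitian_mat H"
  show "adj H = H"
  unfolding vec_eq_iff proof (intro allI)
    fix i j
    have "H $ i $ j = cnj (H $ j $ i)" using h unfolding hermitian_mat_def by blast
    then show "adj H $ i $ j = H $ i $ j" unfolding adj_ent by (metis complex_cnj_cnj)
  qed
next
  assume h: "adj H = H"
  show "hermitian_mat H" unfolding hermitian_mat_def
  proof (intro allI)
    fix i j
    have "adj H $ i $ j = H $ i $ j" using h by simp
    then show "H $ i $ j = cnj (H $ j $ i)" unfolding adj_ent by simp
  qed
qed

lemma adj_adj: "adj (adj M) = M" by (simp add: mat2_eq)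

lemma xfer:
  assumes PQ: "(P::cmat2) ** Q = mat 1" and QP: "Q ** P = mat 1" and h: "adj M ** H ** M = H"
  shows "adj (Q**M**P) ** (adj P ** H ** P) ** (Q**M**P) = adj P ** H ** P"
proof -
  have aa: "adj Q ** adj P = mat 1" using PQ by (metis adj_mult adj_one)
  have "adj (Q**M**P) ** (adj P ** H ** P) ** (Q**M**P) = adj P ** adj M ** (adj Q ** adj P) ** H ** (P ** Q) ** M ** P"
    by (simp add: adj_mult matrix_mul_assoc)
  also have "\<dots> = adj P ** (adj M ** H ** M) ** P" unfolding aa PQ by (simp add: matrix_mul_assoc)
  finally show ?thesis using h by simp
qed

lemma nondeg_intro: "(\<And>w. H *v w = 0 \<Longrightarrow> w = 0) \<Longrightarrow> nondegenerate_form H"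
  unfolding nondegenerate_form_def
proof (intro allI impI)
  fix w assume a: "\<And>w. H *v w = 0 \<Longrightarrow> w = 0" and h: "\<forall>v. hform H v w = 0"
  have "hform H (axis 1 1) w = 0" "hform H (axis 2 1) w = 0" using h by auto
  then have "H *v w = 0" by (simp add: hform_ent axis_def vec2_eq)
  then show "w = 0" using a by blast
qed

lemma scale_mid: fixes B C :: cmat2 shows "adj A ** ((c::real) *\<^sub>R B) ** C = c *\<^sub>R (adj A ** B ** C)"
  unfolding mat2_eq by (simp add: algebra_simps)

lemma tr_comm: fixes A B :: cmat2 shows "(A ** B)$1$1 + (A ** B)$2$2 = (B ** A)$1$1 + (B ** A)$2$2"
  by (simp add: algebra_simps)




lemma ratio:
  fixes x y T :: real
  assumes sT: "sin (T/2) \<noteq> 0"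
  shows "(1 - cis x)*(1 - cis y)*(cis T - cis x)*(cis T - cis y) =
    complex_of_real (-4 * sin (x/2) * sin (y/2) * sin ((T-x)/2) * sin ((T-y)/2) / (sin (T/2))^2) * (cis x * cis y * (1 - cis T)^2)"
proof -
  define C where "C = cis (x+y+T)"
  have h1: "1 - cis a = - 2 * \<i> * complex_of_real (sin (a/2)) * cis (a/2)" for a
    using cis_diff[of 0 a] by simp
  have cT: "cis T - cis x = 2 * \<i> * complex_of_real (sin ((T-x)/2)) * cis ((T+x)/2)"
       "cis T - cis y = 2 * \<i> * complex_of_real (sin ((T-y)/2)) * cis ((T+y)/2)" by (rule cis_diff)+
  have c1: "cis (x/2) * cis (y/2) * cis ((T+x)/2) * cis ((T+y)/2) = C"
  proof -
    have "cis (x/2) * cis (y/2) * cis ((T+x)/2) * cis ((T+y)/2) = cis (x/2 + y/2 + (T+x)/2 + (T+y)/2)"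
      by (simp add: cis_mult)
    also have "\<dots> = C" unfolding C_def by (intro arg_cong[where f=cis]) (simp add: field_simps)
    finally show ?thesis .
  qed
  have c2: "cis x * cis y * (cis (T/2))^2 = C"
  proof -
    have "cis x * cis y * (cis (T/2))^2 = cis (x + y + (T/2 + T/2))"
      by (simp only: cis_mult power2_eq_square mult.assoc)
    also have "x + y + (T/2 + T/2) = x + y + T" by simp
    finally show ?thesis unfolding C_def .
  qed
  have i4: "(\<i>::complex)^4 = 1" by (simp add: power4_eq_xxxx)
  have "(1 - cis x)*(1 - cis y)*(cis T - cis x)*(cis T - cis y) =
     16 * (\<i>*\<i>*\<i>*\<i>) * complex_of_real (sin (x/2) * sin (y/2) * sin ((T-x)/2) * sin ((T-y)/2)) *
     (cis (x/2) * cis (y/2) * cis ((T+x)/2) * cis ((T+y)/2))"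
    unfolding h1 cT by (simp add: algebra_simps)
  also have "\<dots> = 16 * complex_of_real (sin (x/2) * sin (y/2) * sin ((T-x)/2) * sin ((T-y)/2)) * C"
    unfolding c1 by simp
  finally have L: "(1 - cis x)*(1 - cis y)*(cis T - cis x)*(cis T - cis y) = 16 * complex_of_real (sin (x/2) * sin (y/2) * sin ((T-x)/2) * sin ((T-y)/2)) * C" .
  have "cis x * cis y * (1 - cis T)^2 = 4 * (\<i>*\<i>) * complex_of_real ((sin (T/2))^2) * (cis x * cis y * (cis (T/2))^2)"
    unfolding h1 by (simp add: algebra_simps power2_eq_square)
  also have "\<dots> = - 4 * complex_of_real ((sin (T/2))^2) * C" unfolding c2 by simp
  finally have R: "cis x * cis y * (1 - cis T)^2 = - 4 * complex_of_real ((sin (T/2))^2) * C" .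
  show ?thesis unfolding L R using sT by (simp add: field_simps)
qed




lemma cis_pts_neq: "r0 \<noteq> 0 \<Longrightarrow> 0 \<le> a \<Longrightarrow> a < 2*pi \<Longrightarrow> 0 \<le> b \<Longrightarrow> b < 2*pi \<Longrightarrow> a \<noteq> b \<Longrightarrow> r0 * cis a \<noteq> r0 * cis b"
  using cis_inj by auto

lemma interlace_angles:
  fixes T x y :: real
  assumes r0: "r0 \<noteq> 0" and a: "0 < T" "T < 2*pi" "0 < x" "x < 2*pi" "0 < y" "y < 2*pi" "x \<noteq> y" "x \<noteq> T" "y \<noteq> T"
  shows "interlace (r0*cis 0) (r0*cis T) (r0*cis x) (r0*cis y) \<longleftrightarrow> \<not> (x < T \<longleftrightarrow> y < T)"
proof -
  have n: "r0*cis 0 \<noteq> r0*cis T" "r0*cis x \<noteq> r0*cis y"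
    by (rule cis_pts_neq[OF r0]; use a in auto)+
  have m: "r0 * cis Z \<in> ccw_arc (r0 * cis A) (r0 * cis B) \<longleftrightarrow> Z \<noteq> A \<and> dd Z A < dd B A"
    if "0 \<le> A" "A < 2*pi" "0 \<le> B" "B < 2*pi" "0 \<le> Z" "Z < 2*pi" "A \<noteq> B" for A B Z
    using arc_mem[OF r0 that(1-2) that(3-4) that(5-6) that(7)] .
  show ?thesis
    unfolding interlace_def card_one[OF n(1)] card_one[OF n(2)]
    using a
    apply (subst (1 2 3 4 5 6 7 8) m)
    using arith_interlace[OF a] by simp_all
qed

lemma angle_main:
  fixes r1 r2 s1 s2 :: complex
  assumes n: "cmod r1 = 1" "cmod r2 = 1" "cmod s1 = 1" "cmod s2 = 1"
    and d: "r1 \<noteq> r2" "s1 \<noteq> s2" "r1 \<noteq> s1" "r1 \<noteq> s2" "r2 \<noteq> s1" "r2 \<noteq> s2"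
  shows "\<exists>K::real. (r1-s1)*(r1-s2)*(r2-s1)*(r2-s2) = complex_of_real K * (s1 * s2*(r1-r2)^2)
           \<and> (K > 0 \<longleftrightarrow> interlace r1 r2 s1 s2)"
proof -
  have r10: "r1 \<noteq> 0" using n by auto
  have rep: "r1 * cis (Arg2pi (z/r1)) = z" if "cmod z = 1" for z
  proof -
    have "cmod (z/r1) = 1" using that n by (simp add: norm_divide)
    then have "z/r1 = cis (Arg2pi (z/r1))" using Arg2pi_eq[of "z/r1"] by (simp add: cis_conv_exp)
    then show ?thesis using r10 by (simp add: field_simps)
  qed
  define T where "T = Arg2pi (r2/r1)"
  define x where "x = Arg2pi (s1/r1)"
  define y where "y = Arg2pi (s2/r1)"
  have eT: "r1 * cis T = r2" and ex: "r1 * cis x = s1" and ey: "r1 * cis y = s2"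
    unfolding T_def x_def y_def using rep n by auto
  have rg: "0 \<le> T" "T < 2*pi" "0 \<le> x" "x < 2*pi" "0 \<le> y" "y < 2*pi"
    unfolding T_def x_def y_def using Arg2pi by auto
  have T0: "T \<noteq> 0" using eT d by auto
  have x0: "x \<noteq> 0" using ex d by auto
  have y0: "y \<noteq> 0" using ey d by auto
  have xy: "x \<noteq> y" using ex ey d by auto
  have xT: "x \<noteq> T" using ex eT d by auto
  have yT: "y \<noteq> T" using ey eT d by auto
  define K where "K = -4 * sin (x/2) * sin (y/2) * sin ((T-x)/2) * sin ((T-y)/2) / (sin (T/2))^2"
  have sT: "sin (T/2) > 0" using rg T0 by (intro sin_gt_zero) auto
  have sx: "sin (x/2) > 0" using rg x0 by (intro sin_gt_zero) auto
  have sy: "sin (y/2) > 0" using rg y0 by (intro sin_gt_zero) auto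
  have sgn: "(sin ((T-z)/2) > 0 \<longleftrightarrow> z < T) \<and> (sin ((T-z)/2) < 0 \<longleftrightarrow> T < z)" if "0 \<le> z" "z < 2*pi" for z
  proof (cases "z < T")
    case True
    then have "sin ((T-z)/2) > 0" using rg that by (intro sin_gt_zero) auto
    then show ?thesis using True by auto
  next
    case False
    show ?thesis
    proof (cases "z = T")
      case True then show ?thesis by simp
    next
      case F2: False
      then have "sin ((z-T)/2) > 0" using rg that False by (intro sin_gt_zero) auto
      moreover have "sin ((T-z)/2) = - sin ((z-T)/2)" proof -
        have "(T-z)/2 = - ((z-T)/2)" by (metis minus_diff_eq minus_divide_left)
        then show ?thesis by (simp only: sin_minus)
      qed
      ultimately show ?thesis using False F2 by auto
    qed
  qed
  have Kpos: "K > 0 \<longleftrightarrow> \<not> (x < T \<longleftrightarrow> y < T)"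
  proof -
    have "K > 0 \<longleftrightarrow> sin ((T-x)/2) * sin ((T-y)/2) < 0"
    proof -
      define c where "c = 4 * sin (x/2) * sin (y/2) / (sin (T/2))^2"
      have c0: "c > 0" unfolding c_def using sT sx sy by simp
      have "K = - (c * (sin ((T-x)/2) * sin ((T-y)/2)))" unfolding K_def c_def by (simp add: field_simps)
      then have "K > 0 \<longleftrightarrow> c * (sin ((T-x)/2) * sin ((T-y)/2)) < c * 0" by simp
      also have "\<dots> \<longleftrightarrow> sin ((T-x)/2) * sin ((T-y)/2) < 0" using c0 by (rule mult_less_cancel_left_pos)
      finally show ?thesis .
    qed
    also have "\<dots> \<longleftrightarrow> \<not> (x < T \<longleftrightarrow> y < T)"
      using sgn[of x] sgn[of y] rg xT yT by (auto simp: mult_less_0_iff)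
    finally show ?thesis .
  qed
  have "(r1-s1)*(r1-s2)*(r2-s1)*(r2-s2) = r1^4 * ((1 - cis x)*(1 - cis y)*(cis T - cis x)*(cis T - cis y))"
    unfolding eT[symmetric] ex[symmetric] ey[symmetric] by algebra
  also have "\<dots> = r1^4 * (complex_of_real K * (cis x * cis y * (1 - cis T)^2))"
    unfolding K_def using ratio[of T x y] sT by simp
  also have "\<dots> = complex_of_real K * (s1 * s2*(r1-r2)^2)"
    unfolding eT[symmetric] ex[symmetric] ey[symmetric] by algebra
  finally have E: "(r1-s1)*(r1-s2)*(r2-s1)*(r2-s2) = complex_of_real K * (s1 * s2*(r1-r2)^2)" .
  have "interlace r1 r2 s1 s2 = interlace (r1*cis 0) (r1*cis T) (r1*cis x) (r1*cis y)"
    by (simp only: eT ex ey cis_zero mult_1_right)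
  also have "\<dots> \<longleftrightarrow> \<not> (x < T \<longleftrightarrow> y < T)"
    using interlace_angles[OF r10] rg T0 x0 y0 xy xT yT by simp
  finally show ?thesis using E Kpos by blast
qed




lemma inv_S_entries:
  fixes M :: cmat2 and p q u t pi :: complex
  assumes e: "M$1$1 = p" "M$1$2 = q" "M$2$1 = u" "M$2$2 = t"
    and tX: "t = pi * cnj p" and qu: "q*u = pi*(p*cnj p - 1)" and pu: "pi * cnj pi = 1"
  shows "adj M ** diag2 (u*cnj u) (1 - p*cnj p) ** M = diag2 (u*cnj u) (1 - p*cnj p)"
proof -
  have cqu: "cnj q * cnj u = cnj pi * (cnj p * p - 1)" using arg_cong[OF qu, of cnj] by simp
  have e11: "cnj p * (u*cnj u * p) + cnj u * ((1 - p*cnj p) * u) = u * cnj u" by (simp add: algebra_simps)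
  have "cnj p * (u*cnj u * q) + cnj u * ((1 - p*cnj p) * t) = cnj u * cnj p * (q*u + pi*(1 - p*cnj p))"
    unfolding tX by (simp add: algebra_simps)
  also have "\<dots> = 0" unfolding qu by (simp add: algebra_simps)
  finally have e12: "cnj p * (u*cnj u * q) + cnj u * ((1 - p*cnj p) * t) = 0" .
  have "cnj q * (u*cnj u * p) + cnj t * ((1 - p*cnj p) * u) = p * u * (cnj q * cnj u + cnj pi * (1 - p*cnj p))"
    unfolding tX by (simp add: algebra_simps)
  also have "\<dots> = 0" unfolding cqu by (simp add: algebra_simps)
  finally have e21: "cnj q * (u*cnj u * p) + cnj t * ((1 - p*cnj p) * u) = 0" .
  have "cnj q * (u*cnj u * q) + cnj t * ((1 - p*cnj p) * t) = (q*u) * (cnj q * cnj u) + (1 - p*cnj p) * (pi * cnj pi) * (p * cnj p)"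
    unfolding tX by (simp add: algebra_simps)
  also have "\<dots> = (pi * cnj pi) * ((p*cnj p - 1) * (cnj p * p - 1) + (1 - p*cnj p) * (p * cnj p))"
    unfolding qu cqu by (simp add: algebra_simps)
  also have "\<dots> = 1 - p * cnj p" unfolding pu by (simp add: algebra_simps)
  finally have e22: "cnj q * (u*cnj u * q) + cnj t * ((1 - p*cnj p) * t) = 1 - p*cnj p" .
  show ?thesis unfolding mat2_eq using e11 e12 e21 e22 by (simp add: e mult.assoc)
qed




lemma hform_diag: "hform (diag2 (complex_of_real a) (complex_of_real b)) x x = complex_of_real (a * (cmod (x$1))^2 + b * (cmod (x$2))^2)"
proof -
  have "hform (diag2 (complex_of_real a) (complex_of_real b)) x x = complex_of_real a * (x$1 * cnj (x$1)) + complex_of_real b * (x$2 * cnj (x$2))"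
    by (simp add: hform_ent algebra_simps)
  also have "\<dots> = complex_of_real (a * (cmod (x$1))^2 + b * (cmod (x$2))^2)"
    by (simp flip: complex_norm_square)
  finally show ?thesis .
qed

lemma real_of_cnj: assumes "cnj z = z" shows "z = complex_of_real (Re z)"
proof -
  have "Im (cnj z) = Im z" using assms by simp
  then have "Im z = 0" by simp
  then show ?thesis by (simp add: complex_eq_iff)
qed

lemma unit_cnj: "cmod z = 1 \<Longrightarrow> z * cnj z = 1"
  by (metis complex_norm_square of_real_1 power_one)

theorem lemma24:
  fixes R S :: cmat2 and r1 r2 s1 s2 :: complex
  assumes "invertible R" and "invertible S"
    and "diagonalizable_with R r1 r2" and "diagonalizable_with S s1 s2"
    and "cmod r1 = 1" and "cmod r2 = 1" and "cmod s1 = 1" and "cmod s2 = 1"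
    and "r1 \<noteq> r2" and "s1 \<noteq> s2"
    and "{r1, r2} \<inter> {s1, s2} = {}"
    and "is_eigenvalue (R ** matrix_inv S) 1"
  shows "\<exists>H. hermitian_mat H \<and> nondegenerate_form H \<and> invariant_form H R \<and> invariant_form H S
           \<and> (\<forall>H'. hermitian_mat H' \<and> nondegenerate_form H' \<and> invariant_form H' R \<and> invariant_form H' S
                  \<longrightarrow> (\<exists>c::real. H' = c *\<^sub>R H))
           \<and> (definite_form H \<longleftrightarrow> interlace r1 r2 s1 s2)"
proof -
  have dis: "r1 \<noteq> s1" "r1 \<noteq> s2" "r2 \<noteq> s1" "r2 \<noteq> s2" using assms(11) by auto
  obtain P where P: "invertible P" "R = P ** diag2 r1 r2 ** matrix_inv P"
    using assms(3) unfolding diagonalizable_with_def by blast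
  define Q where "Q = matrix_inv P"
  have PQ: "P ** Q = mat 1" and QP: "Q ** P = mat 1" using inv_props[OF P(1)] Q_def by auto
  obtain P2 where P2: "invertible P2" "S = P2 ** diag2 s1 s2 ** matrix_inv P2"
    using assms(4) unfolding diagonalizable_with_def by blast
  define Q2 where "Q2 = matrix_inv P2"
  have PQ2: "P2 ** Q2 = mat 1" and QP2: "Q2 ** P2 = mat 1" using inv_props[OF P2(1)] Q2_def by auto
  define DR where "DR = diag2 r1 r2"
  have RD: "R = P ** DR ** Q" using P(2) DR_def Q_def by simp
  have DRQ: "Q ** R ** P = DR"
  proof -
    have "Q ** R ** P = (Q ** P) ** DR ** (Q ** P)" unfolding RD by (simp add: matrix_mul_assoc)
    then show ?thesis unfolding QP by simp
  qed
  define S' where "S' = Q ** S ** P"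
  have SD: "S = P ** S' ** Q"
  proof -
    have "P ** S' ** Q = (P ** Q) ** S ** (P ** Q)" unfolding S'_def by (simp add: matrix_mul_assoc)
    then show ?thesis unfolding PQ by simp
  qed
  define p where "p = S'$1$1"
  define q where "q = S'$1$2"
  define u where "u = S'$2$1"
  define t where "t = S'$2$2"
  have Se: "S'$1$1 = p" "S'$1$2 = q" "S'$2$1 = u" "S'$2$2 = t" using p_def q_def u_def t_def by auto
  have trS: "S$1$1 + S$2$2 = s1 + s2"
  proof -
    have "S$1$1 + S$2$2 = (P2 ** (diag2 s1 s2 ** Q2))$1$1 + (P2 ** (diag2 s1 s2 ** Q2))$2$2"
      using P2(2) Q2_def by (simp add: matrix_mul_assoc)
    also have "\<dots> = ((diag2 s1 s2 ** Q2) ** P2)$1$1 + ((diag2 s1 s2 ** Q2) ** P2)$2$2" by (rule tr_comm)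
    also have "(diag2 s1 s2 ** Q2) ** P2 = diag2 s1 s2" using QP2 by (simp add: matrix_mul_assoc[symmetric])
    finally show ?thesis by simp
  qed
  have tr: "p + t = s1 + s2"
  proof -
    have "p + t = (Q ** (S ** P))$1$1 + (Q ** (S ** P))$2$2" unfolding p_def t_def S'_def by (simp add: matrix_mul_assoc)
    also have "\<dots> = ((S ** P) ** Q)$1$1 + ((S ** P) ** Q)$2$2" by (rule tr_comm)
    also have "(S ** P) ** Q = S" using PQ by (simp add: matrix_mul_assoc[symmetric])
    finally show ?thesis using trS by simp
  qed
  have dQP: "det Q * det P = 1" using QP by (metis det_I det_mul)
  have dQP2: "det P2 * det Q2 = 1" using PQ2 by (metis det_I det_mul)
  have dS: "det S = s1 * s2"
  proof -
    have "det S = det P2 * det (diag2 s1 s2) * det Q2" using P2(2) Q2_def by (simp add: det_mul)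
    also have "\<dots> = (det P2 * det Q2) * det (diag2 s1 s2)" by simp
    finally show ?thesis using dQP2 by (simp add: det_2)
  qed
  have dt: "p*t - q*u = s1 * s2"
  proof -
    have "det S' = det Q * det S * det P" unfolding S'_def by (simp add: det_mul)
    also have "\<dots> = (det Q * det P) * det S" by simp
    finally have "det S' = s1 * s2" using dQP dS by simp
    then show ?thesis by (simp add: det_2 Se)
  qed
  obtain v where v: "v \<noteq> 0" "(R ** matrix_inv S) *v v = 1 *s v"
    using assms(12) unfolding is_eigenvalue_def by blast
  have SS: "S ** matrix_inv S = mat 1" using inv_props[OF assms(2)] by simp
  define w where "w = matrix_inv S *v v"
  have Sw: "S *v w = v" unfolding w_def by (simp add: matrix_vector_mul_assoc SS)
  have Rw: "R *v w = v" using v(2) unfolding w_def by (simp add: matrix_vector_mul_assoc)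
  define w' where "w' = Q *v w"
  have Pw: "P *v w' = w" unfolding w'_def by (simp add: matrix_vector_mul_assoc PQ)
  have w'0: "w' \<noteq> 0"
  proof
    assume "w' = 0"
    then have "w = 0" using Pw by simp
    then show False using Sw v(1) by simp
  qed
  have "DR *v w' = Q *v v"
    unfolding DRQ[symmetric] by (simp add: matrix_vector_mul_assoc[symmetric] Pw Rw)
  moreover have "S' *v w' = Q *v v"
    unfolding S'_def by (simp add: matrix_vector_mul_assoc[symmetric] Pw Sw)
  ultimately have eqw: "DR *v w' = S' *v w'" by simp
  have e1: "r1 * w'$1 = p * w'$1 + q * w'$2" and e2: "r2 * w'$2 = u * w'$1 + t * w'$2"
    using arg_cong[OF eqw, of "\<lambda>x. x$1"] arg_cong[OF eqw, of "\<lambda>x. x$2"] by (simp_all add: DR_def Se)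
  have ev: "(r1-p)*(r2-t) = q*u"
  proof (rule ccontr)
    assume ne: "(r1-p)*(r2-t) \<noteq> q*u"
    have "((r1-p)*(r2-t) - q*u) * w'$1 = (r2-t) * ((r1 - p) * w'$1 - q * w'$2) + q * ((r2 - t) * w'$2 - u * w'$1)"
      by (simp add: algebra_simps)
    also have "\<dots> = 0" using e1 e2 by (simp add: algebra_simps)
    finally have z1: "w'$1 = 0" using ne by simp
    have "((r1-p)*(r2-t) - q*u) * w'$2 = (r1-p) * ((r2 - t) * w'$2 - u * w'$1) + u * ((r1 - p) * w'$1 - q * w'$2)"
      by (simp add: algebra_simps)
    also have "\<dots> = 0" using e1 e2 by (simp add: algebra_simps)
    finally have z2: "w'$2 = 0" using ne by simp
    show False using z1 z2 w'0 by (simp add: vec2_eq)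
  qed
  have u1: "r1 * cnj r1 = 1" "r2 * cnj r2 = 1" "s1 * cnj s1 = 1" "s2 * cnj s2 = 1"
    using unit_cnj assms(5-8) by auto
  note A = alg[OF u1 assms(9) dis tr dt ev]
  obtain K where K: "(r1-s1)*(r1-s2)*(r2-s1)*(r2-s2) = complex_of_real K * (s1 * s2*(r1-r2)^2)"
     "K > 0 \<longleftrightarrow> interlace r1 r2 s1 s2"
    using angle_main[OF assms(5-8) assms(9) assms(10) dis] by blast
  have pu: "(s1 * s2) * cnj (s1 * s2) = 1" using u1 by (simp add: algebra_simps)
  define a where "a = (cmod u)^2"
  define b where "b = 1 - (cmod p)^2"
  have ca: "complex_of_real a = u * cnj u" unfolding a_def by (rule complex_norm_square)
  have cb: "complex_of_real b = 1 - p * cnj p" unfolding b_def of_real_diff of_real_1 complex_norm_square ..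
  have a0: "a > 0" unfolding a_def using A(4) by simp
  have X0: "s1 * s2 * (r1-r2)^2 \<noteq> 0" using assms(9) u1 by auto
  have "(1 - p * cnj p) * (s1 * s2 * (r1-r2)^2) = complex_of_real K * (s1 * s2 * (r1-r2)^2)"
    using A(5) K(1) by simp
  then have "1 - p * cnj p = complex_of_real K" using X0 by simp
  then have bK: "b = K" using cb by simp
  have b0: "b \<noteq> 0"
  proof
    assume "b = 0"
    then have "p * cnj p = 1" using cb by simp
    then have "q * u = 0" using A(2) by simp
    then show False using A(3,4) by simp
  qed
  define D where "D = diag2 (complex_of_real a) (complex_of_real b)"
  have D': "D = diag2 (u * cnj u) (1 - p * cnj p)" unfolding D_def ca cb ..
  have invDS: "adj S' ** D ** S' = D" unfolding D' by (rule inv_S_entries[OF Se A(1) A(2) pu])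
  have ur: "cnj r1 * (z * r1) = z" "cnj r2 * (z * r2) = z" for z
    using u1 by (metis mult.commute mult.left_commute mult_1_right)+
  have invDR: "adj DR ** D ** DR = D" unfolding mat2_eq DR_def D_def using u1 by (simp add: ur mult.commute)
  define H where "H = adj Q ** D ** Q"
  have adjD: "adj D = D" unfolding D_def mat2_eq by simp
  have hermH: "hermitian_mat H" unfolding herm_iff H_def by (simp add: adj_mult adj_adj adjD matrix_mul_assoc)
  have invR: "invariant_form H R" unfolding inv_form_iff H_def RD
    using xfer[OF QP PQ invDR] by simp
  have invS: "invariant_form H S" unfolding inv_form_iff H_def SD
    using xfer[OF QP PQ invDS] by simp
  have PH: "adj P ** H = D ** Q"
  proof -
    have "adj P ** H = adj (Q ** P) ** D ** Q" unfolding H_def by (simp add: adj_mult matrix_mul_assoc)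
    then show ?thesis unfolding QP adj_one by simp
  qed
  have nondeg: "nondegenerate_form H"
  proof (rule nondeg_intro)
    fix w assume "H *v w = 0"
    then have "(adj P ** H) *v w = 0" by (simp flip: matrix_vector_mul_assoc)
    then have "D *v (Q *v w) = 0" unfolding PH by (simp flip: matrix_vector_mul_assoc)
    then have "Q *v w = 0" using a0 b0 unfolding D_def by (simp add: vec2_eq)
    then have "P *v (Q *v w) = 0" by simp
    then show "w = 0" by (simp add: matrix_vector_mul_assoc PQ)
  qed
  have uniq: "\<exists>c::real. H' = c *\<^sub>R H"
    if h: "hermitian_mat H'" "invariant_form H' R" "invariant_form H' S" for H'
  proof -
    define H0 where "H0 = adj P ** H' ** P"
    have iR: "adj DR ** H0 ** DR = H0" unfolding H0_def DRQ[symmetric]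
      using xfer[OF PQ QP h(2)[unfolded inv_form_iff]] .
    have iS: "adj S' ** H0 ** S' = H0" unfolding H0_def S'_def
      using xfer[OF PQ QP h(3)[unfolded inv_form_iff]] .
    have hH0: "adj H0 = H0" using h(1) unfolding herm_iff H0_def by (simp add: adj_mult adj_adj matrix_mul_assoc)
    have "(adj DR ** H0 ** DR)$1$2 = H0$1$2" using iR by simp
    then have "cnj r1 * (H0$1$2 * r2) = H0$1$2" by (simp add: DR_def)
    then have "(cnj r1 * r2 - 1) * H0$1$2 = 0" by (simp add: algebra_simps)
    moreover have "cnj r1 * r2 \<noteq> 1"
    proof
      assume "cnj r1 * r2 = 1"
      then have "r1 * (cnj r1 * r2) = r1" by simp
      then have "r2 = r1" using u1(1) by (simp add: mult.assoc[symmetric])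
      then show False using assms(9) by simp
    qed
    ultimately have h12: "H0$1$2 = 0" by simp
    have "(adj H0)$2$1 = H0$2$1" using hH0 by simp
    then have h21: "H0$2$1 = 0" using h12 by simp
    have "(adj H0)$1$1 = H0$1$1" "(adj H0)$2$2 = H0$2$2" using hH0 by simp_all
    then have "cnj (H0$1$1) = H0$1$1" "cnj (H0$2$2) = H0$2$2" by simp_all
    then have h11: "H0$1$1 = complex_of_real (Re (H0$1$1))" and h22: "H0$2$2 = complex_of_real (Re (H0$2$2))"
      using real_of_cnj by blast+
    define k1 where "k1 = Re (H0$1$1)"
    define k2 where "k2 = Re (H0$2$2)"
    have h11': "H0$1$1 = complex_of_real k1" unfolding k1_def by (rule h11)
    have h22': "H0$2$2 = complex_of_real k2" unfolding k2_def by (rule h22)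
    have "(adj S' ** H0 ** S')$1$1 = H0$1$1" using iS by simp
    then have "cnj p * (H0$1$1 * p) + cnj u * (H0$2$2 * u) = H0$1$1" by (simp add: Se h12 h21 mult.assoc)
    then have "complex_of_real k1 * (p * cnj p) + complex_of_real k2 * (u * cnj u) = complex_of_real k1"
      unfolding h11' h22' by (simp add: algebra_simps)
    then have "complex_of_real k1 * (1 - complex_of_real b) + complex_of_real k2 * complex_of_real a = complex_of_real k1"
      unfolding ca cb by simp
    then have "complex_of_real (k1 * (1 - b) + k2 * a) = complex_of_real k1" by simp
    then have kk: "k1 * (1 - b) + k2 * a = k1" using of_real_eq_iff by blast
    define c where "c = k1 / a"
    have "H0 = c *\<^sub>R D"
    proof -
      have ca1: "c * a = k1" unfolding c_def using a0 by simp
      have "k2 * a = k1 * b" using kk by (simp add: algebra_simps)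
      then have cb1: "c * b = k2" unfolding c_def using a0 by (simp add: field_simps)
      have "complex_of_real k1 = c *\<^sub>R complex_of_real a" "complex_of_real k2 = c *\<^sub>R complex_of_real b"
        unfolding ca1[symmetric] cb1[symmetric] by (simp_all add: scaleR_conv_of_real)
      then show ?thesis unfolding mat2_eq D_def by (simp add: h11' h22' h12 h21)
    qed
    moreover have "H' = adj Q ** H0 ** Q"
    proof -
      have "adj Q ** H0 ** Q = adj (P ** Q) ** H' ** (P ** Q)" unfolding H0_def by (simp add: adj_mult matrix_mul_assoc)
      then show ?thesis unfolding PQ adj_one by simp
    qed
    ultimately have "H' = c *\<^sub>R H" unfolding H_def by (simp add: scale_mid)
    then show ?thesis by blast
  qed
  have hv: "hform H x x = complex_of_real (a * (cmod ((Q *v x)$1))^2 + b * (cmod ((Q *v x)$2))^2)" for x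
    unfolding H_def hform_mv[symmetric] D_def by (rule hform_diag)
  have QPx: "Q *v (P *v y) = y" for y by (simp add: matrix_vector_mul_assoc QP)
  have PQx: "P *v (Q *v y) = y" for y by (simp add: matrix_vector_mul_assoc PQ)
  have def_iff: "definite_form H \<longleftrightarrow> b > 0"
  proof
    assume df: "definite_form H"
    show "b > 0"
    proof (rule ccontr)
      assume nb: "\<not> b > 0"
      define v1 where "v1 = P *v axis 1 1"
      define v2 where "v2 = P *v axis 2 1"
      have Qv1: "Q *v v1 = axis 1 1" and Qv2: "Q *v v2 = axis 2 1" unfolding v1_def v2_def by (simp_all add: QPx)
      have v1n: "v1 \<noteq> 0" using Qv1 by (metis axis_eq_0_iff matrix_vector_mult_0_right zero_neq_one)
      have v2n: "v2 \<noteq> 0" using Qv2 by (metis axis_eq_0_iff matrix_vector_mult_0_right zero_neq_one)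
      have r1: "Re (hform H v1 v1) = a" unfolding hv Qv1 by (simp add: axis_def)
      have r2: "Re (hform H v2 v2) = b" unfolding hv Qv2 by (simp add: axis_def)
      show False using df v1n v2n r1 r2 nb a0 unfolding definite_form_def by force
    qed
  next
    assume b0': "b > 0"
    have "Re (hform H v v) > 0" if "v \<noteq> 0" for v
    proof -
      have "Q *v v \<noteq> 0" using that PQx by (metis matrix_vector_mult_0_right)
      then have "(Q *v v)$1 \<noteq> 0 \<or> (Q *v v)$2 \<noteq> 0" by (simp add: vec2_eq)
      then have "(cmod ((Q *v v)$1))^2 > 0 \<or> (cmod ((Q *v v)$2))^2 > 0" by auto
      moreover have "(cmod ((Q *v v)$1))^2 \<ge> 0" "(cmod ((Q *v v)$2))^2 \<ge> 0" by auto
      ultimately have "a * (cmod ((Q *v v)$1))^2 + b * (cmod ((Q *v v)$2))^2 > 0"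
        using a0 b0' by (smt (verit) mult_pos_pos mult_nonneg_nonneg)
      then show ?thesis unfolding hv by simp
    qed
    then show "definite_form H" unfolding definite_form_def by blast
  qed
  have "definite_form H \<longleftrightarrow> interlace r1 r2 s1 s2" using def_iff bK K(2) by simp
  then show ?thesis using hermH nondeg invR invS uniq by blast
qed


end
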